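(* Let $m\in\mathbb{N}$. There is a constant $C_m$ depending only on $m$ such that for all $0<\rho\le1$, $$I(\rho)=\frac1\rho\int_1^\infty e^{-\frac12 s^{1/\rho}}\,s^{\frac m\rho+1}\,ds\le C_m.$$ *)

theory Defs
  imports "HOL-Analysis.Analysis"
begin

definition I_integrand :: "nat \<Rightarrow> real \<Rightarrow> real \<Rightarrow> real" where
  "I_integrand m \<rho> s = exp (- (1/2) * s powr (1/\<rho>)) * s powr (real m / \<rho> + 1)"

definition I_rho :: "nat \<Rightarrow> real \<Rightarrow> real" where
  "I_rho m \<rho> = (1/\<rho>) * (LBINT s:{1..}. I_integrand m \<rho> s)"

end

theory Submission imports Defs begin
lemma exp_pow_le: fixes x::real assumes "0 \<le> x" shows "x ^ n / fact n \<le> exp x"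
proof -
  have s: "summable (\<lambda>k. x ^ k / fact k)" using summable_exp[of x] by (simp add: inverse_eq_divide)
  have "x ^ n / fact n \<le> (\<Sum>k<Suc n. x ^ k / fact k)"
    using assms by (simp add: sum_nonneg)
  also have "\<dots> \<le> (\<Sum>k. x ^ k / fact k)"
    by (rule sum_le_suminf[OF s]) (use assms in auto)
  also have "\<dots> = exp x" by (simp add: exp_def inverse_eq_divide)
  finally show ?thesis .
qed

lemma exp_half_pow_le: fixes x::real assumes "0 \<le> x" shows "exp (-(1/2) * x) * x ^ k \<le> 2 ^ k * fact k"
proof -
  have "(x/2) ^ k / fact k \<le> exp (x/2)" using exp_pow_le assms by simp
  hence "x ^ k \<le> 2 ^ k * fact k * exp (x/2)"
    by (simp add: field_simps power_divide)
  hence "exp (-(1/2) * x) * x ^ k \<le> exp (-(1/2) * x) * (2 ^ k * fact k * exp (x/2))"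
    by (intro mult_left_mono) auto
  also have "\<dots> = 2 ^ k * fact k" by (simp add: exp_add[symmetric] mult.commute mult.left_commute)
  finally show ?thesis .
qed

lemma pw:
  fixes \<rho> s :: real assumes r: "0 < \<rho>" and s: "1 \<le> s"
  shows "exp (- (1/2) * s powr (1/\<rho>)) * s powr (real m / \<rho> + 1)
     \<le> 2 ^ (m+3) * fact (m+3) * s powr (1 - 3/\<rho>)"
proof -
  define x where "x = s powr (1/\<rho>)"
  have x1: "x \<ge> 1" unfolding x_def using s r by (simp add: ge_one_powr_ge_zero)
  have e1: "s powr (real m / \<rho> + 1) = x ^ m * s"
    unfolding x_def using s by (simp add: powr_add powr_powr powr_realpow[symmetric])
  have e2: "s powr (1 - 3/\<rho>) = s / x ^ 3"
    unfolding x_def using s by (simp add: powr_diff powr_powr powr_realpow[symmetric])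
  have "exp (-(1/2) * x) * x ^ (m+3) \<le> 2 ^ (m+3) * fact (m+3)"
    using exp_half_pow_le x1 by simp
  hence "exp (-(1/2) * x) * x ^ m * s \<le> 2 ^ (m+3) * fact (m+3) * (s / x ^ 3)"
    using x1 s by (simp add: field_simps power_add)
  thus ?thesis unfolding e1 e2 x_def[symmetric] by (simp add: mult.assoc)
qed

theorem lemma4:
  fixes m :: nat
  shows "\<exists>C::real. \<forall>\<rho>::real. 0 < \<rho> \<and> \<rho> \<le> 1 \<longrightarrow>
           set_integrable lborel {1..} (I_integrand m \<rho>) \<and> I_rho m \<rho> \<le> C"
proof (intro exI allI impI)
  define K :: real where "K = 2 ^ (m+3) * fact (m+3)"
  have K0: "K \<ge> 0" unfolding K_def by simp
  fix \<rho> :: real assume r: "0 < \<rho> \<and> \<rho> \<le> 1"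
  hence r0: "0 < \<rho>" and r1: "\<rho> \<le> 1" by auto
  define e where "e = 1 - 3/\<rho>"
  have "3/\<rho> \<ge> 3" using r0 r1 by (simp add: field_simps)
  hence e: "e < -1" unfolding e_def by simp
  define g where "g = (\<lambda>s::real. K * s powr e)"
  have gi: "(g has_integral K * (-(1 powr (e+1)) / (e+1))) {1..}"
    unfolding g_def by (intro has_integral_mult_right has_integral_powr_to_inf e) simp
  have "g absolutely_integrable_on {1..}"
    using gi K0 by (intro nonnegative_absolutely_integrable_1) (auto simp: g_def integrable_on_def)
  hence gl: "set_integrable lebesgue {1..} g" by (simp add: absolutely_integrable_on_def)
  have measb: "I_integrand m \<rho> \<in> borel_measurable borel"
    unfolding I_integrand_def by measurable
  hence meas: "I_integrand m \<rho> \<in> borel_measurable lborel" by simp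
  have bnd: "\<And>s. s \<in> {1..} \<Longrightarrow> I_integrand m \<rho> s \<le> g s"
    unfolding I_integrand_def g_def e_def K_def using pw r0 by auto
  have fl: "set_integrable lebesgue {1..} (I_integrand m \<rho>)"
  proof (rule set_integrable_bound[OF gl])
    show "set_borel_measurable lebesgue {1..} (I_integrand m \<rho>)"
      unfolding set_borel_measurable_def
      by (intro borel_measurable_scaleR borel_measurable_indicator measurable_completion) (auto intro: measb)
    show "AE x in lebesgue. x \<in> {1..} \<longrightarrow> norm (I_integrand m \<rho> x) \<le> norm (g x)"
      using bnd K0 by (intro AE_I2) (auto simp: I_integrand_def g_def abs_mult)
  qed
  have fb: "set_integrable lborel {1..} (I_integrand m \<rho>)"
    using fl meas unfolding set_integrable_def
    by (subst (asm) integrable_completion) (auto intro!: borel_measurable_indicator)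
  show "set_integrable lborel {1..} (I_integrand m \<rho>) \<and> I_rho m \<rho> \<le> K"
  proof
    show "set_integrable lborel {1..} (I_integrand m \<rho>)" by (fact fb)
    have "(LBINT s:{1..}. I_integrand m \<rho> s) = integral {1..} (I_integrand m \<rho>)"
      by (rule set_borel_integral_eq_integral(2)[OF fb])
    also have "\<dots> \<le> integral {1..} g"
      using bnd set_borel_integral_eq_integral(1)[OF fb] gi
      by (intro integral_le) (auto simp: integrable_on_def)
    also have "\<dots> = K * (-(1 powr (e+1)) / (e+1))" using gi by (rule integral_unique)
    also have "\<dots> = K * (\<rho> / (3 - 2*\<rho>))"
      using r0 r1 unfolding e_def by (simp add: field_simps)
    finally have "I_rho m \<rho> \<le> (1/\<rho>) * (K * (\<rho> / (3 - 2*\<rho>)))"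
      unfolding I_rho_def using r0 by (intro mult_left_mono) auto
    also have "\<dots> = K / (3 - 2*\<rho>)" using r0 r1 by (simp add: field_simps)
    also have "\<dots> \<le> K" using r0 r1 K0 by (simp add: field_simps mult_left_le)
    finally show "I_rho m \<rho> \<le> K" .
  qed
qed
end
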